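(* Let $n\ge1$, $E,m\ge1$, and let $F:\{0,1\}^n\to\mathbb{F}^E_m\cap[0,1]$ be nondecreasing with respect to the lexicographic order $<_{\mathrm{dict}}$ with $F(1^n)=1$. Let $P_F(b):=F(b)-F(b^-)$ for $b\in\{0,1\}^n$, where $b^-$ is the lexicographic predecessor of $b$ and $F((0^n)^-):=0$. Define $p_F:\{0,1\}^*\to[0,1]$ by $p_F(b):=F(b1^{n-|b|})-F((b0^{n-|b|})^-)$ for $|b|\le n$ (exact real subtraction), and $p_F(bb'):=p_F(b)\,\mathbf{1}[b'=0\ldots0]$ for $b\in\{0,1\}^n$ and nonempty $b'\in\{0,1\}^+$. Then $p_F$ is a binary-coded probability distribution and $p_F(b)=P_F(b)$ for all $b\in\{0,1\}^n$.
   Context: $\mathbb{F}^E_m\cap[0,1]$ denotes the set of real numbers in $[0,1]$ exactly representable as IEEE-754-style floating-point numbers with $E$ exponent bits and $m$ mantissa bits (subnormals included). A binary-coded probability distribution is a map $p:\{0,1\}^*\to[0,1]$ with $p(\varepsilon)=1$ and $p(b)=p(b0)+p(b1)$ for every finite binary string $b$ ($\varepsilon$ the empty string). *)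

theory Defs
  imports Complex_Main
begin

text \<open>Binary strings are bool lists; False = 0, True = 1.\<close>

text \<open>IEEE-754-style floats with E exponent bits and m mantissa bits (subnormals
  included; the all-ones exponent is reserved for infinities/NaNs).
  Bias = 2^(E-1) - 1.\<close>
definition fp_bias :: "nat \<Rightarrow> int" where
  "fp_bias E = 2 ^ (E - 1) - 1"

definition float_set :: "nat \<Rightarrow> nat \<Rightarrow> real set" where
  "float_set E m =
     {x. \<exists>(k::nat) (e::int). k < 2 ^ m \<and> 1 \<le> e \<and> e \<le> 2 ^ E - 2 \<and>
          (x = (1 + real k / 2 ^ m) * 2 powr real_of_int (e - fp_bias E) \<or>
           x = - ((1 + real k / 2 ^ m) * 2 powr real_of_int (e - fp_bias E)))}
   \<union> {x. \<exists>(k::nat). k < 2 ^ m \<and>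
          (x = (real k / 2 ^ m) * 2 powr real_of_int (1 - fp_bias E) \<or>
           x = - ((real k / 2 ^ m) * 2 powr real_of_int (1 - fp_bias E)))}"

definition dict_less :: "bool list \<Rightarrow> bool list \<Rightarrow> bool" where
  "dict_less b c \<longleftrightarrow> length b = length c \<and>
     (\<exists>p s t. b = p @ False # s \<and> c = p @ True # t)"

definition dict_pred :: "bool list \<Rightarrow> bool list" where
  "dict_pred b = (THE c. length c = length b \<and> dict_less c b \<and>
       \<not> (\<exists>d. length d = length b \<and> dict_less c d \<and> dict_less d b))"

definition F_minus :: "(bool list \<Rightarrow> real) \<Rightarrow> nat \<Rightarrow> bool list \<Rightarrow> real" where
  "F_minus F n b = (if b = replicate n False then 0 else F (dict_pred b))"

definition P_F :: "(bool list \<Rightarrow> real) \<Rightarrow> nat \<Rightarrow> bool list \<Rightarrow> real" where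
  "P_F F n b = F b - F_minus F n b"

definition p_F :: "(bool list \<Rightarrow> real) \<Rightarrow> nat \<Rightarrow> bool list \<Rightarrow> real" where
  "p_F F n b =
     (if length b \<le> n
      then F (b @ replicate (n - length b) True) - F_minus F n (b @ replicate (n - length b) False)
      else (F (take n b) - F_minus F n (take n b)) * (if (\<forall>x\<in>set (drop n b). \<not> x) then 1 else 0))"

definition binary_coded_distribution :: "(bool list \<Rightarrow> real) \<Rightarrow> bool" where
  "binary_coded_distribution p \<longleftrightarrow>
     (\<forall>b. 0 \<le> p b \<and> p b \<le> 1) \<and> p [] = 1 \<and>
     (\<forall>b. p b = p (b @ [False]) + p (b @ [True]))"

end

theory Submission
  imports Defs
begin

fun nv :: "bool list \<Rightarrow> nat" where
  "nv [] = 0"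
| "nv (x # xs) = (if x then 2 ^ length xs else 0) + nv xs"

lemma nv_lt: "nv xs < 2 ^ length xs"
  by (induction xs) auto

lemma dict_less_Nil[simp]: "\<not> dict_less [] c"
  unfolding dict_less_def by auto

lemma dict_less_Cons:
  "dict_less (x#xs) (y#ys) \<longleftrightarrow> (\<not>x \<and> y \<and> length xs = length ys) \<or> (x = y \<and> dict_less xs ys)"
proof
  assume "dict_less (x#xs) (y#ys)"
  then obtain p s t where l: "length xs = length ys" and b: "x#xs = p @ False # s" and c: "y#ys = p @ True # t"
    unfolding dict_less_def by auto
  show "(\<not>x \<and> y \<and> length xs = length ys) \<or> (x = y \<and> dict_less xs ys)"
  proof (cases p)
    case Nil then show ?thesis using b c l by auto
  next
    case (Cons z p')
    then show ?thesis using b c l unfolding dict_less_def by auto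
  qed
next
  assume "(\<not>x \<and> y \<and> length xs = length ys) \<or> (x = y \<and> dict_less xs ys)"
  then show "dict_less (x#xs) (y#ys)"
  proof
    assume "\<not>x \<and> y \<and> length xs = length ys"
    then have "x#xs = [] @ False # xs \<and> y#ys = [] @ True # ys \<and> length (x#xs) = length (y#ys)" by simp
    then show ?thesis unfolding dict_less_def by blast
  next
    assume "x = y \<and> dict_less xs ys"
    then obtain p s t where "xs = p @ False # s" "ys = p @ True # t" "length xs = length ys"
      unfolding dict_less_def by blast
    then have "x#xs = (x#p) @ False # s \<and> y#ys = (x#p) @ True # t \<and> length (x#xs) = length (y#ys)"
      using \<open>x = y \<and> dict_less xs ys\<close> by simp
    then show ?thesis unfolding dict_less_def by blast
  qed
qed

lemma dict_less_nv: "length b = length c \<Longrightarrow> dict_less b c \<longleftrightarrow> nv b < nv c"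
proof (induction b arbitrary: c)
  case Nil then show ?case by simp
next
  case (Cons x xs)
  then obtain y ys where c: "c = y # ys" and l: "length xs = length ys" by (cases c) auto
  have a: "nv xs < 2 ^ length xs" "nv ys < 2 ^ length xs" using nv_lt[of xs] nv_lt[of ys] l by auto
  show ?case using Cons.IH[OF l] a l unfolding c dict_less_Cons by auto
qed

lemma nv_inj: "length b = length c \<Longrightarrow> nv b = nv c \<Longrightarrow> b = c"
proof (induction b arbitrary: c)
  case Nil then show ?case by simp
next
  case (Cons x xs)
  then obtain y ys where c: "c = y # ys" and l: "length xs = length ys" by (cases c) auto
  have a: "nv xs < 2 ^ length xs" "nv ys < 2 ^ length xs" using nv_lt[of xs] nv_lt[of ys] l by auto
  have "x = y" using Cons.prems a l unfolding c by (auto split: if_splits)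
  then show ?case using Cons.prems Cons.IH[OF l] l unfolding c by auto
qed

lemma nv_surj: "v < 2 ^ n \<Longrightarrow> \<exists>b. length b = n \<and> nv b = v"
proof (induction n arbitrary: v)
  case 0 then show ?case by auto
next
  case (Suc n)
  show ?case
  proof (cases "v < 2 ^ n")
    case True
    then obtain b where "length b = n" "nv b = v" using Suc.IH by blast
    then show ?thesis by (intro exI[of _ "False # b"]) auto
  next
    case False
    then have "v - 2^n < 2^n" using Suc.prems by auto
    then obtain b where "length b = n" "nv b = v - 2^n" using Suc.IH by blast
    then show ?thesis using False by (intro exI[of _ "True # b"]) auto
  qed
qed

lemma nv_append: "nv (xs @ ys) = nv xs * 2 ^ length ys + nv ys"
  by (induction xs) (auto simp: power_add algebra_simps)

lemma nv_repF[simp]: "nv (replicate k False) = 0"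
  by (induction k) auto

lemma nv_repT: "nv (replicate k True) + 1 = 2 ^ k"
  by (induction k) auto

lemma nv_zero: "nv b = 0 \<longleftrightarrow> b = replicate (length b) False"
  by (induction b) auto

lemma dict_pred_nv:
  assumes "nv b > 0"
  shows "length (dict_pred b) = length b \<and> nv (dict_pred b) = nv b - 1"
proof -
  have "nv b - 1 < 2 ^ length b" using nv_lt[of b] by simp
  then obtain c where c: "length c = length b" "nv c = nv b - 1"
    using nv_surj by blast
  have cb: "dict_less c b" using c assms dict_less_nv[of c b] by simp
  have nod: "\<not> (\<exists>d. length d = length b \<and> dict_less c d \<and> dict_less d b)"
  proof
    assume "\<exists>d. length d = length b \<and> dict_less c d \<and> dict_less d b"
    then obtain d where d: "length d = length b" "dict_less c d" "dict_less d b" by blast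
    have "nv c < nv d" using d c dict_less_nv[of c d] by simp
    moreover have "nv d < nv b" using d dict_less_nv[of d b] by simp
    ultimately show False using c assms by simp
  qed
  have "dict_pred b = c" unfolding dict_pred_def
  proof (rule the_equality)
    show "length c = length b \<and> dict_less c b \<and>
       \<not> (\<exists>d. length d = length b \<and> dict_less c d \<and> dict_less d b)" using c cb nod by blast
  next
    fix c' assume h: "length c' = length b \<and> dict_less c' b \<and>
       \<not> (\<exists>d. length d = length b \<and> dict_less c' d \<and> dict_less d b)"
    have "nv c' < nv b" using h dict_less_nv[of c' b] by simp
    moreover have "\<not> nv c' < nv c"
    proof
      assume "nv c' < nv c"
      then have "dict_less c' c" using h c dict_less_nv[of c' c] by simp
      then show False using h c cb by blast
    qed
    ultimately have "nv c' = nv c" using c by linarith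
    then show "c' = c" using nv_inj[of c' c] h c by simp
  qed
  then show ?thesis using c by simp
qed


lemma F_mono_nv:
  assumes mono: "\<forall>b c. length b = n \<and> length c = n \<and> dict_less b c \<longrightarrow> F b \<le> F c"
    and "length c = n" "length d = n" "nv c \<le> nv d"
  shows "F c \<le> (F d :: real)"
proof (cases "nv c = nv d")
  case True then have "c = d" using nv_inj assms by auto
  then show ?thesis by simp
next
  case False then have "dict_less c d" using assms dict_less_nv[of c d] by simp
  then show ?thesis using mono assms by blast
qed

lemma Fm_bounds:
  assumes rng: "\<forall>b. length b = n \<longrightarrow> F b \<in> X \<and> 0 \<le> F b \<and> F b \<le> (1::real)"
    and "length c = n"
  shows "0 \<le> F_minus F n c \<and> F_minus F n c \<le> 1"
proof (cases "c = replicate n False")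
  case True then show ?thesis by (simp add: F_minus_def)
next
  case False
  then have "nv c > 0" using nv_zero[of c] assms by auto
  then have "length (dict_pred c) = n" using dict_pred_nv assms by auto
  then show ?thesis using False rng by (simp add: F_minus_def)
qed

lemma Fm_le:
  assumes rng: "\<forall>b. length b = n \<longrightarrow> F b \<in> X \<and> 0 \<le> F b \<and> F b \<le> (1::real)"
    and mono: "\<forall>b c. length b = n \<and> length c = n \<and> dict_less b c \<longrightarrow> F b \<le> F c"
    and "length c0 = n" "length c1 = n" "nv c0 \<le> nv c1"
  shows "F_minus F n c0 \<le> F c1"
proof (cases "c0 = replicate n False")
  case True then show ?thesis using rng assms by (simp add: F_minus_def)
next
  case False
  then have "nv c0 > 0" using nv_zero[of c0] assms by auto
  then have "length (dict_pred c0) = n" "nv (dict_pred c0) \<le> nv c1" using dict_pred_nv[of c0] assms by auto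
  then have "F (dict_pred c0) \<le> F c1" using F_mono_nv[OF mono] assms by blast
  then show ?thesis using False by (simp add: F_minus_def)
qed

lemma Fm_split:
  assumes "n = length b + Suc k"
  shows "F_minus F n (b @ True # replicate k False) = F (b @ False # replicate k True)"
proof -
  let ?c = "b @ True # replicate k False"
  let ?d = "b @ False # replicate k True"
  have r: "nv (replicate k True) + 1 = 2 ^ k" by (rule nv_repT)
  have nc: "nv ?c = nv b * 2 ^ Suc k + 2 ^ k" by (simp add: nv_append)
  have nd: "nv ?d = nv b * 2 ^ Suc k + nv (replicate k True)" by (simp add: nv_append)
  have pos: "nv ?c > 0" using nc by simp
  have ne: "?c \<noteq> replicate n False"
  proof
    assume h: "?c = replicate n False"
    have "True \<in> set ?c" by simp
    then have "True \<in> set (replicate n False)" using h by simp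
    then show False by simp
  qed
  have "length (dict_pred ?c) = length ?c" "nv (dict_pred ?c) = nv ?c - 1" using dict_pred_nv[OF pos] by auto
  moreover have "nv ?c - 1 = nv ?d" using nc nd r by simp
  ultimately have "dict_pred ?c = ?d" using nv_inj[of "dict_pred ?c" ?d] by simp
  then show ?thesis using ne by (simp add: F_minus_def)
qed

theorem proposition5p13:
  fixes n E m :: nat and F :: "bool list \<Rightarrow> real"
  assumes "n \<ge> 1" and "E \<ge> 1" and "m \<ge> 1"
    and "\<forall>b. length b = n \<longrightarrow> F b \<in> float_set E m \<and> 0 \<le> F b \<and> F b \<le> 1"
    and "\<forall>b c. length b = n \<and> length c = n \<and> dict_less b c \<longrightarrow> F b \<le> F c"
    and "F (replicate n True) = 1"
  shows "binary_coded_distribution (p_F F n) \<and>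
         (\<forall>b. length b = n \<longrightarrow> p_F F n b = P_F F n b)"
proof -
  note rng = assms(4) and mono = assms(5) and top = assms(6)
  have bnd: "0 \<le> p_F F n b \<and> p_F F n b \<le> 1" for b
  proof (cases "length b \<le> n")
    case True
    let ?k = "n - length b"
    have l1: "length (b @ replicate ?k True) = n" "length (b @ replicate ?k False) = n" using True by auto
    have nvle: "nv (b @ replicate ?k False) \<le> nv (b @ replicate ?k True)" by (simp add: nv_append)
    have "F_minus F n (b @ replicate ?k False) \<le> F (b @ replicate ?k True)"
      using Fm_le[OF rng mono l1(2) l1(1) nvle] .
    moreover have "F (b @ replicate ?k True) \<le> 1" using rng l1 by blast
    moreover have "0 \<le> F_minus F n (b @ replicate ?k False)" using Fm_bounds[OF rng l1(2)] by blast
    ultimately show ?thesis using True by (simp add: p_F_def)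
  next
    case False
    have l: "length (take n b) = n" using False by simp
    have "F_minus F n (take n b) \<le> F (take n b)" using Fm_le[OF rng mono l l] by simp
    moreover have "F (take n b) \<le> 1" using rng l by blast
    moreover have "0 \<le> F_minus F n (take n b)" using Fm_bounds[OF rng l] by blast
    ultimately show ?thesis using False by (simp add: p_F_def)
  qed
  have p0: "p_F F n [] = 1" using top by (simp add: p_F_def F_minus_def)
  have add: "p_F F n b = p_F F n (b @ [False]) + p_F F n (b @ [True])" for b
  proof -
    consider (lt) "length b < n" | (eq) "length b = n" | (gt) "length b > n" by linarith
    then show ?thesis
    proof cases
      case lt
      then obtain k where k: "n = length b + Suc k" by (metis add_Suc_right less_imp_Suc_add)
      have sp: "F_minus F n (b @ True # replicate k False) = F (b @ False # replicate k True)"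
        using Fm_split[OF k] .
      have e: "n - length b = Suc k" "n - Suc (length b) = k" using k by auto
      show ?thesis using sp lt e by (simp add: p_F_def)
    next
      case eq
      have t: "take n (b @ [x]) = b" "drop n (b @ [x]) = [x]" "\<not> length (b @ [x]) \<le> n" for x using eq by auto
      have an: "\<not> (\<forall>x::bool. \<not> x)" by blast
      show ?thesis using eq an unfolding p_F_def t by simp
    next
      case gt
      then show ?thesis by (simp add: p_F_def)
    qed
  qed
  have part2: "\<forall>b. length b = n \<longrightarrow> p_F F n b = P_F F n b"
  proof (intro allI impI)
    fix b :: "bool list" assume "length b = n"
    then show "p_F F n b = P_F F n b" by (simp add: p_F_def P_F_def)
  qed
  show ?thesis using bnd p0 add part2 unfolding binary_coded_distribution_def by blast
qed

end
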